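(* Let $n\ge1$, $V=(\mathbb F_2)^n$, let $\rho\in\mathrm{Sym}(V)$ with $0\rho=0$, and let $\bar\rho$ be the corresponding Feistel operator. For $i=1,2$ let $A_i, D_i$ be subgroups of $V$ and let $\varphi_i:A_i\to V$ be a group homomorphism, and set \[ \mathcal U_i=\{(a,\ a\varphi_i+d)\mid a\in A_i,\ d\in D_i\}\le V\times V. \] Suppose $\mathcal U_1\bar\rho=\mathcal U_2$. Then: \begin{enumerate} \item $\mathrm{Ker}\,\varphi_1\le D_2$; \item $D_2\le A_1$; \item $A_2=A_1\varphi_1+D_1$; \item $D_2\varphi_1\le D_1$. \end{enumerate} Moreover, \begin{itemize} \item[(i)] if $D_1=\{0\}$ and $D_2=\{0\}$, then $\rho$ is linear on $A_2$, i.e. $(x+y)\rho=x\rho+y\rho$ for all $x,y\in A_2$; \item[(ii)] if $\mathcal U_1=A_1\times D_1$ and $\mathcal U_2=A_2\times D_2$, then $D_1=A_2$ and $D_2=A_1$. \end{itemize}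
   Context: Maps act on the right; $+$ is bitwise XOR. For $\rho\in\mathrm{Sym}(V)$, the Feistel operator induced by $\rho$ is $\bar\rho:V\times V\to V\times V$, $(x_1,x_2)\bar\rho=(x_2,\ x_1+x_2\rho)$. For a set $S$ and a map $f$, $Sf=\{sf\mid s\in S\}$. *)

theory Defs
  imports "HOL-Analysis.Finite_Cartesian_Product" "HOL-Library.Z2"
begin

text \<open>V = (F_2)^n is modelled as the type bit ^ 'n for a finite index type 'n
  (so n = CARD('n) \<ge> 1); addition is componentwise addition in F_2, i.e. XOR.\<close>

type_synonym 'n V = "bit ^ 'n"

definition feistel :: "('n::finite V \<Rightarrow> 'n V) \<Rightarrow> 'n V \<times> 'n V \<Rightarrow> 'n V \<times> 'n V" where
  "feistel \<rho> = (\<lambda>(x1, x2). (x2, x1 + \<rho> x2))"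

text \<open>Subgroup of V (every element is its own inverse, so closure under + and 0 suffices;
  we also state closure under negation for literal faithfulness).\<close>
definition subgrp :: "'n::finite V set \<Rightarrow> bool" where
  "subgrp A \<longleftrightarrow> 0 \<in> A \<and> (\<forall>x\<in>A. \<forall>y\<in>A. x + y \<in> A) \<and> (\<forall>x\<in>A. - x \<in> A)"

definition ghom_on :: "'n::finite V set \<Rightarrow> ('n V \<Rightarrow> 'n V) \<Rightarrow> bool" where
  "ghom_on A \<phi> \<longleftrightarrow> (\<forall>x\<in>A. \<forall>y\<in>A. \<phi> (x + y) = \<phi> x + \<phi> y)"

definition Ugrp :: "'n::finite V set \<Rightarrow> 'n V set \<Rightarrow> ('n V \<Rightarrow> 'n V) \<Rightarrow> ('n V \<times> 'n V) set" where
  "Ugrp A D \<phi> = {(a, \<phi> a + d) | a d. a \<in> A \<and> d \<in> D}"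

end

theory Submission
  imports Defs
begin

lemma bit_self: "(b::bit) + b = 0"
  by (cases b) simp_all
lemma V_self: "(x::'n::finite V) + x = 0"
  by (simp add: vec_eq_iff bit_self)
lemma V_canc[simp]: "(x::'n::finite V) + (x + y) = y"
  by (simp add: add.assoc[symmetric] V_self)
lemma V_sum0: "(p::'n::finite V) + q = 0 \<Longrightarrow> q = p"
proof -
  assume "p + q = 0"
  then have "p + (p + q) = p" by simp
  then show "q = p" by simp
qed

lemma Ugrp_iff: "((x::'n::finite V), y) \<in> Ugrp A D \<phi> \<longleftrightarrow> x \<in> A \<and> \<phi> x + y \<in> D"
proof
  assume "(x, y) \<in> Ugrp A D \<phi>"
  then obtain a d where "x = a" "y = \<phi> a + d" "a \<in> A" "d \<in> D" unfolding Ugrp_def by blast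
  then show "x \<in> A \<and> \<phi> x + y \<in> D" by simp
next
  assume h: "x \<in> A \<and> \<phi> x + y \<in> D"
  have "y = \<phi> x + (\<phi> x + y)" by simp
  then show "(x, y) \<in> Ugrp A D \<phi>" using h unfolding Ugrp_def by blast
qed

lemma hom0: assumes "subgrp A" "ghom_on A \<phi>" shows "\<phi> 0 = (0::'n::finite V)"
proof -
  have "\<phi> (0 + 0) = \<phi> 0 + \<phi> 0" using assms unfolding subgrp_def ghom_on_def by blast
  then show ?thesis by simp
qed

theorem lemma4p6:
  fixes \<rho> \<phi>1 \<phi>2 :: "'n::finite V \<Rightarrow> 'n V"
    and A1 A2 D1 D2 :: "'n V set"
  assumes rho_sym: "bij \<rho>"
    and rho0: "\<rho> 0 = 0"
    and A1: "subgrp A1" and A2: "subgrp A2"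
    and D1: "subgrp D1" and D2: "subgrp D2"
    and phi1: "ghom_on A1 \<phi>1" and phi2: "ghom_on A2 \<phi>2"
    and U: "feistel \<rho> ` Ugrp A1 D1 \<phi>1 = Ugrp A2 D2 \<phi>2"
  shows "{a \<in> A1. \<phi>1 a = 0} \<subseteq> D2
    \<and> D2 \<subseteq> A1
    \<and> A2 = {\<phi>1 a + d | a d. a \<in> A1 \<and> d \<in> D1}
    \<and> \<phi>1 ` D2 \<subseteq> D1
    \<and> (D1 = {0} \<and> D2 = {0} \<longrightarrow> (\<forall>x\<in>A2. \<forall>y\<in>A2. \<rho> (x + y) = \<rho> x + \<rho> y))
    \<and> (Ugrp A1 D1 \<phi>1 = A1 \<times> D1 \<and> Ugrp A2 D2 \<phi>2 = A2 \<times> D2 \<longrightarrow> D1 = A2 \<and> D2 = A1)"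
proof -
  have fw: "\<phi>1 a + d \<in> A2 \<and> \<phi>2 (\<phi>1 a + d) + (a + \<rho> (\<phi>1 a + d)) \<in> D2"
    if "a \<in> A1" "d \<in> D1" for a d
  proof -
    have "(a, \<phi>1 a + d) \<in> Ugrp A1 D1 \<phi>1" using that by (simp add: Ugrp_iff)
    then have "feistel \<rho> (a, \<phi>1 a + d) \<in> Ugrp A2 D2 \<phi>2" using U by blast
    then show ?thesis by (simp add: feistel_def Ugrp_iff)
  qed
  have bw: "\<exists>a d. a \<in> A1 \<and> d \<in> D1 \<and> b = \<phi>1 a + d \<and> \<phi>2 b + e = a + \<rho> b"
    if "b \<in> A2" "e \<in> D2" for b e
  proof -
    have "(b, \<phi>2 b + e) \<in> Ugrp A2 D2 \<phi>2" using that by (simp add: Ugrp_iff)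
    then obtain q where q: "q \<in> Ugrp A1 D1 \<phi>1" "(b, \<phi>2 b + e) = feistel \<rho> q" using U by blast
    obtain a y where qa: "q = (a, y)" by fastforce
    define d where "d = \<phi>1 a + y"
    have "a \<in> A1" "d \<in> D1" using q(1) qa d_def by (simp_all add: Ugrp_iff)
    moreover have "y = \<phi>1 a + d" using d_def by simp
    ultimately show ?thesis using q(2) qa by (auto simp: feistel_def)
  qed
  have p20: "\<phi>2 0 = 0" using hom0 A2 phi2 by blast
  have A10: "0 \<in> A1" and A20: "0 \<in> A2" and D10: "0 \<in> D1" and D20: "0 \<in> D2"
    using A1 A2 D1 D2 by (auto simp: subgrp_def)
  have r1: "{a \<in> A1. \<phi>1 a = 0} \<subseteq> D2"
  proof
    fix a assume "a \<in> {a \<in> A1. \<phi>1 a = 0}"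
    then have h: "a \<in> A1" "\<phi>1 a = 0" by auto
    have "\<phi>2 (\<phi>1 a + 0) + (a + \<rho> (\<phi>1 a + 0)) \<in> D2" using fw[OF h(1) D10] by blast
    then show "a \<in> D2" using h(2) p20 rho0 by simp
  qed
  have r2: "e \<in> A1 \<and> \<phi>1 e \<in> D1" if eD: "e \<in> D2" for e
  proof -
    obtain a d where ad: "a \<in> A1" "d \<in> D1" "0 = \<phi>1 a + d" "\<phi>2 0 + e = a + \<rho> 0"
      using bw[OF A20 eD] by blast
    have "e = a" using ad(4) p20 rho0 by simp
    moreover have "\<phi>1 a = d" using ad(3) V_canc[of "\<phi>1 a" d] by simp
    ultimately show ?thesis using ad by simp
  qed
  have r3: "A2 = {\<phi>1 a + d | a d. a \<in> A1 \<and> d \<in> D1}"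
  proof
    show "A2 \<subseteq> {\<phi>1 a + d | a d. a \<in> A1 \<and> d \<in> D1}"
    proof
      fix b assume "b \<in> A2"
      then show "b \<in> {\<phi>1 a + d | a d. a \<in> A1 \<and> d \<in> D1}" using bw[OF _ D20] by blast
    qed
    show "{\<phi>1 a + d | a d. a \<in> A1 \<and> d \<in> D1} \<subseteq> A2" using fw by blast
  qed
  have ri: "\<forall>x\<in>A2. \<forall>y\<in>A2. \<rho> (x + y) = \<rho> x + \<rho> y" if z: "D1 = {0}" "D2 = {0}"
  proof (intro ballI)
    have key: "\<rho> (\<phi>1 a) = a + \<phi>2 (\<phi>1 a)" if "a \<in> A1" for a
    proof -
      have "\<phi>2 (\<phi>1 a) + (a + \<rho> (\<phi>1 a)) \<in> D2" using fw[OF that D10] z by simp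
      then have "\<phi>2 (\<phi>1 a) + (a + \<rho> (\<phi>1 a)) = 0" using z by simp
      then have "(\<phi>2 (\<phi>1 a) + a) + \<rho> (\<phi>1 a) = 0" by (simp only: add.assoc)
      then have "\<rho> (\<phi>1 a) = \<phi>2 (\<phi>1 a) + a" by (rule V_sum0)
      then show ?thesis by (simp only: add.commute)
    qed
    fix x y assume xy: "x \<in> A2" "y \<in> A2"
    have D1z: "{\<phi>1 a + d | a d. a \<in> A1 \<and> d \<in> D1} = {\<phi>1 a + 0 | a. a \<in> A1}" using z by blast
    obtain a where a: "a \<in> A1" "x = \<phi>1 a" using xy(1) unfolding r3 D1z by auto
    obtain b where b: "b \<in> A1" "y = \<phi>1 b" using xy(2) unfolding r3 D1z by auto
    have ab: "a + b \<in> A1" using a b A1 unfolding subgrp_def by blast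
    have "\<phi>1 (a + b) = \<phi>1 a + \<phi>1 b" using a b phi1 unfolding ghom_on_def by blast
    then have "x + y = \<phi>1 (a + b)" using a b by simp
    then have e1: "\<rho> (x + y) = (a + b) + \<phi>2 (x + y)" using key[OF ab] by simp
    have e2: "\<phi>2 (x + y) = \<phi>2 x + \<phi>2 y" using phi2 xy unfolding ghom_on_def by blast
    have e3: "\<rho> x = a + \<phi>2 x" "\<rho> y = b + \<phi>2 y" using key[OF a(1)] key[OF b(1)] a b by simp_all
    show "\<rho> (x + y) = \<rho> x + \<rho> y" unfolding e1 e2 e3 by (simp only: ac_simps)
  qed
  have rii: "D1 = A2 \<and> D2 = A1" if u: "Ugrp A1 D1 \<phi>1 = A1 \<times> D1" "Ugrp A2 D2 \<phi>2 = A2 \<times> D2"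
  proof -
    have U': "feistel \<rho> ` (A1 \<times> D1) = A2 \<times> D2" using U u by simp
    have "D1 \<subseteq> A2"
    proof
      fix d assume "d \<in> D1"
      then have "feistel \<rho> (0, d) \<in> A2 \<times> D2" using U' A10 by blast
      then show "d \<in> A2" by (simp add: feistel_def)
    qed
    moreover have "A2 \<subseteq> D1"
    proof
      fix b assume "b \<in> A2"
      then have "(b, 0) \<in> feistel \<rho> ` (A1 \<times> D1)" using U' D20 by blast
      then show "b \<in> D1" by (auto simp: feistel_def)
    qed
    moreover have "A1 \<subseteq> D2"
    proof
      fix a assume "a \<in> A1"
      then have "feistel \<rho> (a, 0) \<in> A2 \<times> D2" using U' D10 by blast
      then show "a \<in> D2" using rho0 by (simp add: feistel_def)
    qed
    ultimately show ?thesis using r2 by blast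
  qed
  have c2: "D2 \<subseteq> A1" using r2 by blast
  have c4: "\<phi>1 ` D2 \<subseteq> D1" using r2 by blast
  show ?thesis
    apply (rule conjI, fact r1)
    apply (rule conjI, fact c2)
    apply (rule conjI, fact r3)
    apply (rule conjI, fact c4)
    apply (rule conjI)
    using ri apply blast
    using rii by blast
qed

end
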